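(* Let $X$ be a nontrivial real Banach space. The following assertions are equivalent: (i) $X^*$ has the weak$^*$ strong diameter $2$ property; (ii) $X$ is octahedral; (iii) whenever $E$ is a finite-dimensional subspace of $X$, $n\in\mathbb{N}$, $x_1^*,\dots,x_n^*\in B_{X^*}$, $\varepsilon>0$, and $\varepsilon_0\in(0,\varepsilon)$, there is a $y\in S_X$ such that, whenever $|\gamma_i|\leq 1+\varepsilon_0$ for $i\in\{1,\dots,n\}$, there are $y_i^*\in X^*$ satisfying $y_i^*|_E=x_i^*|_E$, $y_i^*(y)=\gamma_i$, and $\|y_i^*\|\leq 1+\varepsilon$ for all $i\in\{1,\dots,n\}$; (iii') whenever $E$ is a finite-dimensional subspace of $X$, $n\in\mathbb{N}$, $x_1^*,\dots,x_n^*\in B_{X^*}$, and $\varepsilon>0$, there are $y\in S_X$ and $x_{1i}^*,x_{2i}^*\in X^*$, $i\in\{1,\dots,n\}$, satisfying $x_{1i}^*|_E=x_{2i}^*|_E=x_i^*|_E$, $x_{1i}^*(y)-x_{2i}^*(y)>2-\varepsilon$, and $\|x_{1i}^*\|,\|x_{2i}^*\|\leq 1+\varepsilon$ for all $i\in\{1,\dots,n\}$.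
   Context: $B_Z$, $S_Z$ denote the closed unit ball and unit sphere of a Banach space $Z$. A weak$^*$ slice of $B_{X^*}$ is a set $\{x^*\in B_{X^*}: x^*(x)>1-\alpha\}$ with $x\in S_X$, $\alpha>0$. $X^*$ has the weak$^*$ strong diameter $2$ property if every convex combination $\sum_{i=1}^n\lambda_i S_i$ ($n\in\mathbb{N}$, $\lambda_i\ge0$, $\sum\lambda_i=1$, $S_i$ weak$^*$ slices of $B_{X^*}$) has diameter $2$. $X$ is octahedral if for every finite-dimensional subspace $E$ of $X$ and every $\varepsilon>0$ there is a $y\in S_X$ such that $\|x+y\|\geq(1-\varepsilon)(\|x\|+\|y\|)$ for all $x\in E$. *)

theory Defs
  imports "HOL-Analysis.Analysis"
begin

text \<open>The dual space X* is rendered as the type of bounded linear functionals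
  of type blinfun from the reals, with the operator norm.\<close>

definition fin_dim_subspace :: "'a::real_vector set \<Rightarrow> bool" where
  "fin_dim_subspace E \<longleftrightarrow> (\<exists>B. finite B \<and> E = span B)"

definition weak_star_slice :: "'a::real_normed_vector \<Rightarrow> real \<Rightarrow> ('a \<Rightarrow>\<^sub>L real) set" where
  "weak_star_slice x \<alpha> = {f. norm f \<le> 1 \<and> blinfun_apply f x > 1 - \<alpha>}"

definition w_star_SD2P :: "'a::real_normed_vector itself \<Rightarrow> bool" where
  "w_star_SD2P _ \<longleftrightarrow>
     (\<forall>(n::nat) (lam::nat \<Rightarrow> real) (x::nat \<Rightarrow> 'a) (\<alpha>::nat \<Rightarrow> real).
        n \<ge> 1 \<and> (\<forall>i\<in>{1..n}. lam i \<ge> 0) \<and> (\<Sum>i=1..n. lam i) = 1 \<and>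
        (\<forall>i\<in>{1..n}. norm (x i) = 1 \<and> \<alpha> i > 0) \<longrightarrow>
        diameter {\<Sum>i=1..n. lam i *\<^sub>R f i | f. \<forall>i\<in>{1..n}. f i \<in> weak_star_slice (x i) (\<alpha> i)} = 2)"

definition octahedral :: "'a::real_normed_vector itself \<Rightarrow> bool" where
  "octahedral _ \<longleftrightarrow>
     (\<forall>(E::'a set) (\<epsilon>::real). fin_dim_subspace E \<and> \<epsilon> > 0 \<longrightarrow>
        (\<exists>y. norm y = 1 \<and> (\<forall>x\<in>E. norm (x + y) \<ge> (1 - \<epsilon>) * (norm x + norm y))))"

definition prop_iii :: "'a::real_normed_vector itself \<Rightarrow> bool" where
  "prop_iii _ \<longleftrightarrow>
     (\<forall>(E::'a set) (n::nat) (xs::nat \<Rightarrow> ('a \<Rightarrow>\<^sub>L real)) (\<epsilon>::real) (\<epsilon>0::real).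
        fin_dim_subspace E \<and> n \<ge> 1 \<and> (\<forall>i\<in>{1..n}. norm (xs i) \<le> 1) \<and>
        \<epsilon> > 0 \<and> 0 < \<epsilon>0 \<and> \<epsilon>0 < \<epsilon> \<longrightarrow>
        (\<exists>y. norm y = 1 \<and>
           (\<forall>\<gamma>::nat \<Rightarrow> real. (\<forall>i\<in>{1..n}. \<bar>\<gamma> i\<bar> \<le> 1 + \<epsilon>0) \<longrightarrow>
              (\<exists>ys::nat \<Rightarrow> ('a \<Rightarrow>\<^sub>L real). \<forall>i\<in>{1..n}.
                  (\<forall>e\<in>E. blinfun_apply (ys i) e = blinfun_apply (xs i) e) \<and>
                  blinfun_apply (ys i) y = \<gamma> i \<and> norm (ys i) \<le> 1 + \<epsilon>))))"

definition prop_iii' :: "'a::real_normed_vector itself \<Rightarrow> bool" where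
  "prop_iii' _ \<longleftrightarrow>
     (\<forall>(E::'a set) (n::nat) (xs::nat \<Rightarrow> ('a \<Rightarrow>\<^sub>L real)) (\<epsilon>::real).
        fin_dim_subspace E \<and> n \<ge> 1 \<and> (\<forall>i\<in>{1..n}. norm (xs i) \<le> 1) \<and> \<epsilon> > 0 \<longrightarrow>
        (\<exists>y (x1::nat \<Rightarrow> ('a \<Rightarrow>\<^sub>L real)) (x2::nat \<Rightarrow> ('a \<Rightarrow>\<^sub>L real)).
           norm y = 1 \<and>
           (\<forall>i\<in>{1..n}.
              (\<forall>e\<in>E. blinfun_apply (x1 i) e = blinfun_apply (xs i) e) \<and>
              (\<forall>e\<in>E. blinfun_apply (x2 i) e = blinfun_apply (xs i) e) \<and>
              blinfun_apply (x1 i) y - blinfun_apply (x2 i) y > 2 - \<epsilon> \<and>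
              norm (x1 i) \<le> 1 + \<epsilon> \<and> norm (x2 i) \<le> 1 + \<epsilon>)))"

end

theory Submission
  imports Defs
begin


definition hbfam :: "('a::real_normed_vector \<times> real) set \<Rightarrow> real \<Rightarrow> ('a \<times> real) set set" where
  "hbfam G C = {H. subspace H \<and> G \<subseteq> H \<and> (\<forall>(x,r)\<in>H. r \<le> C * norm x)}"

lemma hb_step:
  fixes H :: "('a::real_normed_vector \<times> real) set"
  assumes C: "C \<ge> 0" and H: "subspace H" and bd: "\<forall>(x,r)\<in>H. r \<le> C * norm x" and x0: "x0 \<notin> fst ` H"
  shows "\<exists>H'. subspace H' \<and> H \<subseteq> H' \<and> H' \<noteq> H \<and> (\<forall>(x,r)\<in>H'. r \<le> C * norm x)"
proof -
  define A where "A = {r - C * norm (x - x0) | x r. (x,r) \<in> H}"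
  define c where "c = Sup A"
  have H0: "(0,0) \<in> H" using H subspace_0 by (metis zero_prod_def)
  have Hadd: "(x+y, r+s) \<in> H" if "(x,r)\<in>H" "(y,s)\<in>H" for x y r s
    using subspace_add[OF H that] by simp
  have Hscale: "(a *\<^sub>R x, a * r) \<in> H" if "(x,r)\<in>H" for a x r
    using subspace_scale[OF H that, of a] by simp
  have key: "s - C * norm (u - x0) \<le> C * norm (v + x0) - w" if "(u,s)\<in>H" "(v,w)\<in>H" for u s v w
  proof -
    have "s + w \<le> C * norm (u + v)" using bd Hadd[OF that] by auto
    also have "norm (u+v) \<le> norm (u - x0) + norm (v + x0)"
      using norm_triangle_ineq[of "u - x0" "v + x0"] by simp
    moreover note C
    ultimately show ?thesis by (smt (verit) mult_left_mono distrib_left)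
  qed
  have Ane: "A \<noteq> {}" using H0 unfolding A_def by blast
  have Aub: "a \<le> C * norm (v + x0) - w" if "a \<in> A" "(v,w)\<in>H" for a v w
    using that key unfolding A_def by blast
  have bdd: "bdd_above A" using Aub[OF _ H0] by (intro bdd_aboveI[where M="C * norm x0"]) simp
  have c_le: "c \<le> C * norm (v + x0) - w" if "(v,w)\<in>H" for v w
    unfolding c_def using Ane Aub that by (meson cSup_least)
  have c_ge: "s - C * norm (u - x0) \<le> c" if "(u,s)\<in>H" for u s
    unfolding c_def using bdd that A_def by (auto intro!: cSup_upper)
  define H' where "H' = {(x + t *\<^sub>R x0, r + t * c) | x r t. (x,r) \<in> H}"
  have sub: "subspace H'"
    unfolding subspace_def
  proof (intro conjI ballI allI)
    show "0 \<in> H'" unfolding H'_def using H0 by (force simp: zero_prod_def)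
  next
    fix p q assume "p \<in> H'" "q \<in> H'"
    then obtain x r t y s u where p: "p = (x + t *\<^sub>R x0, r + t * c)" "(x,r)\<in>H"
      and q: "q = (y + u *\<^sub>R x0, s + u * c)" "(y,s)\<in>H" unfolding H'_def by blast
    have "p + q = ((x+y) + (t+u) *\<^sub>R x0, (r+s) + (t+u)*c)"
      using p q by (simp add: algebra_simps scaleR_add_left)
    then show "p + q \<in> H'" unfolding H'_def using Hadd[OF p(2) q(2)] by blast
  next
    fix a and p :: "'a \<times> real" assume "p \<in> H'"
    then obtain x r t where p: "p = (x + t *\<^sub>R x0, r + t * c)" "(x,r)\<in>H"
      unfolding H'_def by blast
    have "a *\<^sub>R p = (a *\<^sub>R x + (a*t) *\<^sub>R x0, a*r + (a*t)*c)"
      using p by (simp add: algebra_simps scaleR_add_right)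
    then show "a *\<^sub>R p \<in> H'" unfolding H'_def using Hscale[OF p(2)] by blast
  qed
  have sup: "H \<subseteq> H'" unfolding H'_def by force
  have new: "(x0, c) \<in> H'" unfolding H'_def using H0 by force
  have neq: "H' \<noteq> H" using new x0 by force
  have bd': "r + t * c \<le> C * norm (x + t *\<^sub>R x0)" if "(x,r)\<in>H" for x r t
  proof (cases "t = 0")
    case True then show ?thesis using bd that by auto
  next
    case False
    show ?thesis
    proof (cases "t > 0")
      case True
      have "c \<le> C * norm ((1/t) *\<^sub>R x + x0) - (1/t) * r"
        using c_le[OF Hscale[OF that, of "1/t"]] .
      hence "t * c \<le> t * (C * norm ((1/t) *\<^sub>R x + x0) - (1/t) * r)"
        using True by (simp add: mult_left_mono)
      also have "\<dots> = C * (t * norm ((1/t) *\<^sub>R x + x0)) - r" using True by (simp add: algebra_simps)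
      also have "t * norm ((1/t) *\<^sub>R x + x0) = norm (t *\<^sub>R ((1/t) *\<^sub>R x + x0))"
        using True by simp
      also have "t *\<^sub>R ((1/t) *\<^sub>R x + x0) = x + t *\<^sub>R x0" using True by (simp add: scaleR_add_right)
      finally show ?thesis by simp
    next
      case False
      with \<open>t \<noteq> 0\<close> have tn: "t < 0" by simp
      define \<tau> where "\<tau> = - t"
      have tp: "\<tau> > 0" using tn \<tau>_def by simp
      have "(1/\<tau>) * r - C * norm ((1/\<tau>) *\<^sub>R x - x0) \<le> c"
        using c_ge[OF Hscale[OF that, of "1/\<tau>"]] .
      hence "\<tau> * ((1/\<tau>) * r - C * norm ((1/\<tau>) *\<^sub>R x - x0)) \<le> \<tau> * c"
        using tp by (simp add: mult_left_mono)
      moreover have e1: "\<tau> * ((1/\<tau>) * r - C * norm ((1/\<tau>) *\<^sub>R x - x0)) = r - C * (\<tau> * norm ((1/\<tau>) *\<^sub>R x - x0))"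
        using tp by (simp add: algebra_simps)
      moreover have e2: "\<tau> * norm ((1/\<tau>) *\<^sub>R x - x0) = norm (\<tau> *\<^sub>R ((1/\<tau>) *\<^sub>R x - x0))"
        using tp by simp
      moreover have e3: "\<tau> *\<^sub>R ((1/\<tau>) *\<^sub>R x - x0) = x + t *\<^sub>R x0" using tp \<tau>_def by (simp add: scaleR_diff_right)
      ultimately have "r - C * norm (x + t *\<^sub>R x0) \<le> \<tau> * c" by metis
      then show ?thesis using \<tau>_def by (simp add: algebra_simps)
    qed
  qed
  have "\<forall>(x,r)\<in>H'. r \<le> C * norm x" unfolding H'_def using bd' by blast
  then show ?thesis using sub sup neq by blast
qed

lemma hahn_banach_graph:
  fixes G :: "('a::real_normed_vector \<times> real) set"
  assumes C: "C \<ge> 0" and G: "subspace G" and bd: "\<forall>(x,r)\<in>G. r \<le> C * norm x"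
  shows "\<exists>F::'a \<Rightarrow>\<^sub>L real. norm F \<le> C \<and> (\<forall>(x,r)\<in>G. blinfun_apply F x = r)"
proof -
  have "\<exists>M\<in>hbfam G C. \<forall>X\<in>hbfam G C. M \<subseteq> X \<longrightarrow> X = M"
  proof (rule subset_Zorn_nonempty)
    show "hbfam G C \<noteq> {}" using G bd unfolding hbfam_def by blast
  next
    fix \<C> assume ne: "\<C> \<noteq> {}" and ch: "subset.chain (hbfam G C) \<C>"
    have inA: "\<And>X. X \<in> \<C> \<Longrightarrow> X \<in> hbfam G C" using ch by (auto simp: subset.chain_def)
    have cmp: "\<And>X Y. X \<in> \<C> \<Longrightarrow> Y \<in> \<C> \<Longrightarrow> X \<subseteq> Y \<or> Y \<subseteq> X" using ch by (auto simp: subset.chain_def)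
    have "subspace (\<Union>\<C>)"
      unfolding subspace_def
    proof (intro conjI ballI allI)
      obtain X where "X \<in> \<C>" using ne by blast
      then show "0 \<in> \<Union>\<C>" using inA[of X] subspace_0 unfolding hbfam_def by blast
    next
      fix p q assume "p \<in> \<Union>\<C>" "q \<in> \<Union>\<C>"
      then obtain X Y where "p \<in> X" "q \<in> Y" "X \<in> \<C>" "Y \<in> \<C>" by blast
      then show "p + q \<in> \<Union>\<C>" using cmp[of X Y] inA[of X] inA[of Y] subspace_add
        unfolding hbfam_def by (smt (verit) UnionI mem_Collect_eq subsetD)
    next
      fix a p assume "p \<in> \<Union>\<C>"
      then obtain X where "p \<in> X" "X \<in> \<C>" by blast
      then show "a *\<^sub>R p \<in> \<Union>\<C>" using inA[of X] subspace_scale unfolding hbfam_def by blast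
    qed
    moreover have "G \<subseteq> \<Union>\<C>" using ne inA unfolding hbfam_def by blast
    moreover have "\<forall>(x,r)\<in>\<Union>\<C>. r \<le> C * norm x" using inA unfolding hbfam_def by blast
    ultimately show "\<Union>\<C> \<in> hbfam G C" unfolding hbfam_def by blast
  qed
  then obtain H where HA: "H \<in> hbfam G C" and max: "\<forall>X\<in>hbfam G C. H \<subseteq> X \<longrightarrow> X = H" by blast
  have H: "subspace H" and GH: "G \<subseteq> H" and bdH: "\<forall>(x,r)\<in>H. r \<le> C * norm x"
    using HA unfolding hbfam_def by auto
  have full: "x \<in> fst ` H" for x
  proof (rule ccontr)
    assume "x \<notin> fst ` H"
    from hb_step[OF C H bdH this] obtain H' where "subspace H'" "H \<subseteq> H'" "H' \<noteq> H"
      "\<forall>(x,r)\<in>H'. r \<le> C * norm x" by blast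
    then show False using max GH unfolding hbfam_def by blast
  qed
  have Hadd: "(x+y, r+s) \<in> H" if "(x,r)\<in>H" "(y,s)\<in>H" for x y r s
    using subspace_add[OF H that] by simp
  have Hscale: "(a *\<^sub>R x, a * r) \<in> H" if "(x,r)\<in>H" for a x r
    using subspace_scale[OF H that, of a] by simp
  have uniq: "r = s" if "(x,r)\<in>H" "(x,s)\<in>H" for x r s
  proof -
    have "(x + (-1) *\<^sub>R x, r + (-1) * s) \<in> H" using Hadd[OF that(1) Hscale[OF that(2)]] .
    then have a: "(0, r - s) \<in> H" by simp
    have "(0, s - r) \<in> H" using Hscale[OF a, of "-1"] by simp
    then have "s - r \<le> 0" using bdH by fastforce
    moreover have "r - s \<le> 0" using a bdH by fastforce
    ultimately show ?thesis by simp
  qed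
  define f where "f x = (SOME r. (x,r) \<in> H)" for x
  have fH: "(x, f x) \<in> H" for x
    unfolding f_def using full[of x] by (force intro: someI)
  have fadd: "f (x + y) = f x + f y" for x y using uniq[OF fH Hadd[OF fH fH]] .
  have fscale: "f (a *\<^sub>R x) = a * f x" for a x using uniq[OF fH Hscale[OF fH]] .
  have fbd: "\<bar>f x\<bar> \<le> C * norm x" for x
  proof -
    have "f x \<le> C * norm x" using bdH fH by blast
    moreover have "f (-x) \<le> C * norm (-x)" using bdH fH by blast
    moreover have "f (-x) = - f x" using fscale[of "-1" x] by simp
    ultimately show ?thesis by simp
  qed
  have bl: "bounded_linear f"
    by (rule bounded_linear_intro[where K = C]) (use fadd fscale fbd in \<open>auto simp: mult.commute\<close>)
  define F where "F = Blinfun f"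
  have Fa: "blinfun_apply F = f" unfolding F_def using bl by (simp add: bounded_linear_Blinfun_apply)
  have "norm F \<le> C" using C fbd by (intro norm_blinfun_bound) (auto simp: Fa)
  moreover have "\<forall>(x,r)\<in>G. blinfun_apply F x = r"
  proof (clarify)
    fix x r assume "(x,r) \<in> G"
    then have "(x,r) \<in> H" using GH by blast
    then show "blinfun_apply F x = r" using uniq[OF fH] Fa by metis
  qed
  ultimately show ?thesis by blast
qed



lemma norming_functional:
  fixes x :: "'a::real_normed_vector"
  assumes "norm x = 1"
  shows "\<exists>f::'a \<Rightarrow>\<^sub>L real. norm f \<le> 1 \<and> blinfun_apply f x = 1"
proof -
  define G where "G = {(t *\<^sub>R x, t) | t. True}"
  have "subspace G" unfolding subspace_def G_def
  proof (intro conjI ballI allI)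
    show "0 \<in> {(t *\<^sub>R x, t) |t. True}" by (rule CollectI, rule exI[of _ 0]) (simp add: zero_prod_def)
  next
    fix p q assume "p \<in> {(t *\<^sub>R x, t) |t. True}" "q \<in> {(t *\<^sub>R x, t) |t. True}"
    then obtain t u where "p = (t *\<^sub>R x, t)" "q = (u *\<^sub>R x, u)" by blast
    then show "p + q \<in> {(t *\<^sub>R x, t) |t. True}" by (auto intro!: exI[of _ "t+u"] simp: scaleR_add_left)
  next
    fix a p assume "p \<in> {(t *\<^sub>R x, t) |t. True}"
    then obtain t where "p = (t *\<^sub>R x, t)" by blast
    then show "a *\<^sub>R p \<in> {(t *\<^sub>R x, t) |t. True}" by (auto intro!: exI[of _ "a*t"])
  qed
  moreover have "\<forall>(z,r)\<in>G. r \<le> 1 * norm z" unfolding G_def using assms by auto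
  ultimately obtain F :: "'a \<Rightarrow>\<^sub>L real" where "norm F \<le> 1" "\<forall>(z,r)\<in>G. blinfun_apply F z = r"
    using hahn_banach_graph[of 1 G] by auto
  moreover have "(x, 1) \<in> G" unfolding G_def by (auto intro!: exI[of _ 1])
  ultimately show ?thesis by auto
qed

lemma compact_cball_span:
  fixes B :: "'a::real_normed_vector set"
  assumes "finite B"
  shows "compact (cball 0 r \<inter> span B)"
  using assms
proof (induction B arbitrary: r rule: finite_induct)
  case empty
  show ?case by (simp add: Int_absorb1) (metis compact_Int_closed compact_sing closed_cball Int_commute)
next
  case (insert b B)
  show ?case
  proof (cases "b \<in> span B")
    case True
    then show ?thesis using insert.IH by (simp add: span_redundant)
  next
    case False
    then have b0: "b \<noteq> 0" using span_zero by metis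
    define R where "R = 2 * norm b"
    define K where "K = cball 0 R \<inter> span B"
    have K: "compact K" unfolding K_def using insert.IH .
    have bK: "b \<notin> K" using False K_def by blast
    have "infdist b K > 0 \<or> K = {}"
      using infdist_pos_not_in_closed[OF compact_imp_closed[OF K] _ bK] by auto
    define d where "d = (if K = {} then norm b else infdist b K)"
    have dpos: "d > 0" unfolding d_def using b0 \<open>infdist b K > 0 \<or> K = {}\<close> by auto
    define m where "m = min d (norm b)"
    have mpos: "m > 0" unfolding m_def using dpos b0 by simp
    have mdist: "m \<le> norm (b - x)" if x: "x \<in> span B" for x
    proof (cases "norm x \<le> R")
      case True
      then have "x \<in> K" unfolding K_def using x by simp
      then have "K \<noteq> {}" by blast
      then have "d \<le> dist b x" unfolding d_def using infdist_le[OF \<open>x \<in> K\<close>] by simp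
      then show ?thesis unfolding m_def by (simp add: dist_norm)
    next
      case False
      have "norm x - norm b \<le> norm (b - x)" using norm_triangle_ineq3[of x b]
        by (simp add: norm_minus_commute)
      then show ?thesis using False unfolding m_def R_def by simp
    qed
    have tbound: "\<bar>t\<bar> * m \<le> norm (x + t *\<^sub>R b)" if x: "x \<in> span B" for x t
    proof (cases "t = 0")
      case True then show ?thesis by simp
    next
      case False
      have "(-(1/t)) *\<^sub>R x \<in> span B" using x span_scale by blast
      then have "m \<le> norm (b - (-(1/t)) *\<^sub>R x)" by (rule mdist)
      then have "\<bar>t\<bar> * m \<le> \<bar>t\<bar> * norm (b - (-(1/t)) *\<^sub>R x)" by (simp add: mult_left_mono)
      also have "\<dots> = norm (t *\<^sub>R (b - (-(1/t)) *\<^sub>R x))" by simp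
      also have "t *\<^sub>R (b - (-(1/t)) *\<^sub>R x) = x + t *\<^sub>R b" using False
        by (simp add: scaleR_diff_right algebra_simps)
      finally show ?thesis .
    qed
    define T where "T = r / m"
    define R' where "R' = r + T * norm b"
    define g where "g = (\<lambda>p::'a \<times> real. fst p + snd p *\<^sub>R b)"
    have gc: "continuous_on UNIV g" unfolding g_def by (intro continuous_intros)
    have cK: "compact (g ` ((cball 0 R' \<inter> span B) \<times> {-T..T}))"
      by (intro compact_continuous_image continuous_on_subset[OF gc] compact_Times insert.IH) auto
    have eq: "cball 0 r \<inter> span (insert b B) = cball 0 r \<inter> g ` ((cball 0 R' \<inter> span B) \<times> {-T..T})"
    proof
      show "cball 0 r \<inter> span (insert b B) \<subseteq> cball 0 r \<inter> g ` ((cball 0 R' \<inter> span B) \<times> {-T..T})"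
      proof
        fix z assume z: "z \<in> cball 0 r \<inter> span (insert b B)"
        then obtain k where k: "z - k *\<^sub>R b \<in> span B" using span_insert[of b B] by auto
        define x where "x = z - k *\<^sub>R b"
        have zx: "z = x + k *\<^sub>R b" unfolding x_def by simp
        have nz: "norm z \<le> r" using z by simp
        have "\<bar>k\<bar> * m \<le> r" using tbound[OF k[folded x_def], of k] zx nz by simp
        then have kT: "\<bar>k\<bar> \<le> T" unfolding T_def using mpos by (simp add: field_simps)
        have "norm x \<le> norm z + norm (k *\<^sub>R b)" unfolding x_def by (rule norm_triangle_ineq4)
        also have "\<dots> \<le> r + T * norm b" using nz mult_right_mono[OF kT norm_ge_zero[of b]] by simp
        finally have "norm x \<le> R'" unfolding R'_def .
        then have "(x, k) \<in> (cball 0 R' \<inter> span B) \<times> {-T..T}" using k kT x_def by auto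
        moreover have "z = g (x, k)" unfolding g_def using zx by simp
        ultimately show "z \<in> cball 0 r \<inter> g ` ((cball 0 R' \<inter> span B) \<times> {-T..T})" using z by blast
      qed
    next
      show "cball 0 r \<inter> g ` ((cball 0 R' \<inter> span B) \<times> {-T..T}) \<subseteq> cball 0 r \<inter> span (insert b B)"
      proof -
        have "g p \<in> span (insert b B)" if "p \<in> (cball 0 R' \<inter> span B) \<times> {-T..T}" for p
        proof -
          have xB: "fst p \<in> span B" using that by auto
          have "fst p \<in> span (insert b B)" using xB span_mono[of B "insert b B"] by blast
          moreover have "snd p *\<^sub>R b \<in> span (insert b B)" by (intro span_scale span_base) simp
          ultimately show ?thesis unfolding g_def using span_add by auto
        qed
        then show ?thesis by blast
      qed
    qed
    have "compact (g ` ((cball 0 R' \<inter> span B) \<times> {-T..T}) \<inter> cball 0 r)"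
      by (rule compact_Int_closed[OF cK closed_cball])
    then show ?thesis using eq by (metis Int_commute)
  qed
qed

lemma compact_sphere_span:
  fixes B :: "'a::real_normed_vector set"
  assumes "finite B"
  shows "compact (sphere 0 1 \<inter> span B)"
proof -
  have "sphere 0 1 \<inter> span B = (cball 0 1 \<inter> span B) \<inter> sphere 0 1" by auto
  moreover have "compact (cball 0 1 \<inter> span B)" using compact_cball_span[OF assms] .
  moreover have "closed (sphere (0::'a) 1)"
  proof -
    have "sphere (0::'a) 1 = {x. norm x = 1}" by auto
    moreover have "closed {x::'a. norm x = 1}" by (intro closed_Collect_eq continuous_intros)
    ultimately show ?thesis by simp
  qed
  ultimately show ?thesis using compact_Int_closed by metis
qed

lemma oct_point:
  fixes x y :: "'a::real_normed_vector"
  assumes "norm x = 1" "norm y = 1" "norm (x + y) \<ge> 2 - \<delta>" "a \<ge> 0" "\<delta> \<ge> 0"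
  shows "norm (a *\<^sub>R x + y) \<ge> (1 - \<delta>) * (a + 1)"
proof (cases "a \<ge> 1")
  case True
  have "a *\<^sub>R (x + y) = (a *\<^sub>R x + y) + (a - 1) *\<^sub>R y" by (simp add: algebra_simps)
  then have "a * norm (x + y) \<le> norm (a *\<^sub>R x + y) + (a - 1) * norm y"
    using norm_triangle_ineq[of "a *\<^sub>R x + y" "(a - 1) *\<^sub>R y"] True by (metis abs_of_nonneg assms(4) diff_ge_0_iff_ge norm_scaleR)
  moreover have "a * (2 - \<delta>) \<le> a * norm (x + y)" using assms by (simp add: mult_left_mono)
  ultimately show ?thesis using assms True by (simp add: algebra_simps)
next
  case False
  have eq: "x + y = (a *\<^sub>R x + y) + (1 - a) *\<^sub>R x" by (simp add: algebra_simps)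
  have "norm (x + y) \<le> norm (a *\<^sub>R x + y) + norm ((1 - a) *\<^sub>R x)"
    by (metis eq norm_triangle_ineq)
  then have "norm (x + y) \<le> norm (a *\<^sub>R x + y) + (1 - a) * norm x"
    using False by simp
  moreover have "\<delta> * (a + 1) \<ge> \<delta>" using assms by (simp add: algebra_simps)
  moreover have "(1 - \<delta>) * (a + 1) = a + 1 - \<delta> * (a+1)" by (simp add: algebra_simps)
  moreover have "(1 - a) * norm x = 1 - a" using assms by simp
  ultimately show ?thesis using assms False by linarith
qed

lemma oct_point2:
  fixes x y u :: "'a::real_normed_vector"
  assumes "norm x = 1" "norm y = 1" "norm (x + y) \<ge> 2 - \<delta>" "a \<ge> 0" "\<delta> \<ge> 0"
    and "norm (u - x) \<le> \<delta>"
  shows "norm (a *\<^sub>R u + y) \<ge> (1 - 2 * \<delta>) * (a + 1)"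
proof -
  have eq: "a *\<^sub>R x + y = (a *\<^sub>R u + y) - a *\<^sub>R (u - x)" by (simp add: algebra_simps)
  have "norm (a *\<^sub>R x + y) \<le> norm (a *\<^sub>R u + y) + norm (a *\<^sub>R (u - x))"
    by (metis eq norm_triangle_ineq4)
  then have "norm (a *\<^sub>R x + y) \<le> norm (a *\<^sub>R u + y) + a * norm (u - x)"
    using assms(4) by simp
  moreover have "a * norm (u - x) \<le> a * \<delta>" using assms by (simp add: mult_left_mono)
  moreover note oct_point[OF assms(1-5)]
  ultimately show ?thesis using assms by (simp add: algebra_simps)
qed

definition critC :: "'a::real_normed_vector itself \<Rightarrow> bool" where
  "critC _ \<longleftrightarrow> (\<forall>(F::'a set) \<delta>. finite F \<and> (\<forall>x\<in>F. norm x = 1) \<and> \<delta> > 0 \<longrightarrow>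
      (\<exists>y::'a. norm y = 1 \<and> (\<forall>x\<in>F. norm (x + y) \<ge> 2 - \<delta>)))"

lemma critC_octahedral:
  assumes "critC TYPE('a::real_normed_vector)"
  shows "octahedral TYPE('a)"
  unfolding octahedral_def
proof (intro allI impI)
  fix E :: "'a set" and \<epsilon> :: real
  assume H: "fin_dim_subspace E \<and> \<epsilon> > 0"
  then obtain B where B: "finite B" "E = span B" unfolding fin_dim_subspace_def by blast
  define \<delta> where "\<delta> = \<epsilon> / 2"
  have dp: "\<delta> > 0" using H \<delta>_def by simp
  define S where "S = sphere (0::'a) 1 \<inter> span B"
  have cS: "compact S" unfolding S_def using compact_sphere_span[OF B(1)] .
  have "S \<subseteq> (\<Union>c\<in>S. ball c \<delta>)" using dp by force
  then obtain k where k: "k \<subseteq> S" "finite k" "S \<subseteq> (\<Union>c\<in>k. ball c \<delta>)"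
    using compactE_image[OF cS, of S "\<lambda>c. ball c \<delta>"] by auto
  have "\<forall>x\<in>k. norm x = 1" using k(1) S_def by auto
  then obtain y where y: "norm y = 1" "\<forall>x\<in>k. norm (x + y) \<ge> 2 - \<delta>"
    using assms dp k(2) unfolding critC_def by blast
  have "\<forall>x\<in>E. norm (x + y) \<ge> (1 - \<epsilon>) * (norm x + norm y)"
  proof
    fix x assume xE: "x \<in> E"
    show "norm (x + y) \<ge> (1 - \<epsilon>) * (norm x + norm y)"
    proof (cases "x = 0")
      case True then show ?thesis using y H by simp
    next
      case False
      define u where "u = (1 / norm x) *\<^sub>R x"
      have uS: "u \<in> S" unfolding S_def u_def using xE B False by (auto intro: span_scale)
      then obtain c where c: "c \<in> k" "u \<in> ball c \<delta>" using k(3) by blast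
      have "norm c = 1" using c k(1) S_def by auto
      moreover have "norm (u - c) \<le> \<delta>" using c(2) by (simp add: dist_norm norm_minus_commute)
      ultimately have "norm (norm x *\<^sub>R u + y) \<ge> (1 - 2 * \<delta>) * (norm x + 1)"
        using oct_point2[of c y \<delta> "norm x" u] y c dp by auto
      moreover have "norm x *\<^sub>R u = x" unfolding u_def using False by simp
      ultimately show ?thesis using y \<delta>_def by simp
    qed
  qed
  then show "\<exists>y. norm y = 1 \<and> (\<forall>x\<in>E. norm (x + y) \<ge> (1 - \<epsilon>) * (norm x + norm y))"
    using y by blast
qed



lemma blinfun_norm_witness:
  fixes f :: "'a::real_normed_vector \<Rightarrow>\<^sub>L real"
  assumes "a < norm f" "0 \<le> a"
  shows "\<exists>y. norm y = 1 \<and> a < blinfun_apply f y"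
proof -
  have "norm f = (SUP x. norm (blinfun_apply f x) / norm x)"
    by (simp add: norm_blinfun.rep_eq onorm_def)
  moreover have "bdd_above (range (\<lambda>x. norm (blinfun_apply f x) / norm x))"
  proof (rule bdd_aboveI2[where M = "norm f"])
    fix x
    show "norm (blinfun_apply f x) / norm x \<le> norm f"
      using norm_blinfun[of f x] by (cases "x = 0") (auto simp: divide_le_eq)
  qed
  ultimately obtain x where x: "a < norm (blinfun_apply f x) / norm x"
    using assms less_cSUP_iff[of UNIV] by auto
  have x0: "x \<noteq> 0" using x assms by auto
  define y where "y = (1 / norm x) *\<^sub>R x"
  have ny: "norm y = 1" using x0 y_def by simp
  have fy: "\<bar>blinfun_apply f y\<bar> = norm (blinfun_apply f x) / norm x"
    unfolding y_def by (simp add: blinfun.scaleR_right)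
  show ?thesis
  proof (cases "blinfun_apply f y > a")
    case True then show ?thesis using ny by blast
  next
    case False
    then have "a < blinfun_apply f (-y)" using fy x by (simp add: blinfun.minus_right)
    moreover have "norm (-y) = 1" using ny by simp
    ultimately show ?thesis by blast
  qed
qed

lemma sum_term_lower:
  fixes d :: "nat \<Rightarrow> real"
  assumes "finite A" "j \<in> A" "\<forall>i\<in>A. d i \<le> M"
  shows "d j \<ge> sum d A - M * (card A - 1)"
proof -
  have "sum d A = d j + sum d (A - {j})" using assms by (simp add: sum.remove)
  moreover have "sum d (A - {j}) \<le> of_nat (card (A - {j})) * M"
    using assms sum_bounded_above[of "A - {j}" d M] by auto
  moreover have "card (A - {j}) = card A - 1" using assms by simp
  ultimately show ?thesis by (simp add: algebra_simps)
qed

lemma wSD2P_critC: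
  assumes nt: "\<exists>x::'a::real_normed_vector. x \<noteq> 0" and W: "w_star_SD2P TYPE('a)"
  shows "critC TYPE('a)"
  unfolding critC_def
proof (intro allI impI)
  fix F :: "'a set" and \<delta> :: real
  assume H: "finite F \<and> (\<forall>x\<in>F. norm x = 1) \<and> \<delta> > 0"
  obtain z0 :: 'a where "z0 \<noteq> 0" using nt by blast
  define z where "z = (1 / norm z0) *\<^sub>R z0"
  have nz: "norm z = 1" using \<open>z0 \<noteq> 0\<close> z_def by simp
  define F' where "F' = insert z F"
  have fin: "finite F'" using H F'_def by simp
  have unit: "\<forall>x\<in>F'. norm x = 1" using H nz F'_def by simp
  define n where "n = card F'"
  have n1: "n \<ge> 1" using fin n_def F'_def by (simp add: card_gt_0_iff Suc_le_eq)
  obtain h where h: "bij_betw h {1..n} F'" using ex_bij_betw_nat_finite_1[OF fin] n_def by blast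
  define lam :: "nat \<Rightarrow> real" where "lam = (\<lambda>i. 1 / real n)"
  define \<alpha> :: "nat \<Rightarrow> real" where "\<alpha> = (\<lambda>i. \<delta> / 2)"
  have hu: "\<forall>i\<in>{1..n}. norm (h i) = 1 \<and> \<alpha> i > 0"
    using h unit H unfolding \<alpha>_def bij_betw_def by auto
  have lsum: "(\<Sum>i=1..n. lam i) = 1" unfolding lam_def using n1 by simp
  define D where "D = {\<Sum>i=1..n. lam i *\<^sub>R f i | f. \<forall>i\<in>{1..n}. f i \<in> weak_star_slice (h i) (\<alpha> i)}"
  have diam: "diameter D = 2"
    using W unfolding w_star_SD2P_def D_def using n1 hu lsum unfolding lam_def by auto
  have Dne: "D \<noteq> {}" using diam unfolding diameter_def by (auto split: if_splits)
  have Dnorm: "norm p \<le> 1" if pD: "p \<in> D" for p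
  proof -
    obtain f where p: "p = (\<Sum>i=1..n. lam i *\<^sub>R f i)" and f: "\<forall>i\<in>{1..n}. f i \<in> weak_star_slice (h i) (\<alpha> i)"
      using pD D_def by blast
    have "norm p \<le> (\<Sum>i=1..n. norm (lam i *\<^sub>R f i))" unfolding p by (rule norm_sum)
    also have "\<dots> \<le> (\<Sum>i=1..n. lam i)"
      using f unfolding lam_def weak_star_slice_def by (intro sum_mono) (auto simp: divide_le_eq)
    finally show ?thesis using lsum by simp
  qed
  have bdd: "bdd_above ((\<lambda>(p,q). dist p q) ` (D \<times> D))"
  proof (rule bdd_aboveI2[where M = 2])
    fix pq assume "pq \<in> D \<times> D"
    then obtain p q where "pq = (p,q)" "p \<in> D" "q \<in> D" by blast
    then show "(case pq of (p,q) \<Rightarrow> dist p q) \<le> 2"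
      using Dnorm[of p] Dnorm[of q] norm_triangle_ineq4[of p q] by (simp add: dist_norm)
  qed
  define \<eta> where "\<eta> = min 1 (\<delta> / (2 * n))"
  have npos: "real n > 0" using n1 by simp
  have eta1: "\<eta> > 0" "\<eta> \<le> 1" using H npos unfolding \<eta>_def by auto
  have "n * \<eta> \<le> n * (\<delta> / (2 * n))" unfolding \<eta>_def using npos by (intro mult_left_mono) auto
  also have "\<dots> = \<delta> / 2" using npos by simp
  finally have eta: "\<eta> > 0" "\<eta> \<le> 1" "n * \<eta> \<le> \<delta> / 2" using eta1 by auto
  have "2 - \<eta> < (SUP (p,q)\<in>D\<times>D. dist p q)" using diam Dne eta unfolding diameter_def by simp
  then obtain p q where pq: "p \<in> D" "q \<in> D" "2 - \<eta> < dist p q"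
    using less_cSUP_iff[OF _ bdd] Dne by force
  obtain f where p: "p = (\<Sum>i=1..n. lam i *\<^sub>R f i)" and f: "\<forall>i\<in>{1..n}. f i \<in> weak_star_slice (h i) (\<alpha> i)"
    using pq D_def by blast
  obtain g where q: "q = (\<Sum>i=1..n. lam i *\<^sub>R g i)" and g: "\<forall>i\<in>{1..n}. g i \<in> weak_star_slice (h i) (\<alpha> i)"
    using pq D_def by blast
  obtain y where y: "norm y = 1" "2 - \<eta> < blinfun_apply (p - q) y"
    using blinfun_norm_witness[of "2 - \<eta>" "p - q"] pq eta by (auto simp: dist_norm)
  define d where "d i = blinfun_apply (f i) y - blinfun_apply (g i) y" for i
  have papp: "blinfun_apply (p - q) y = (\<Sum>i=1..n. d i) / n"
    unfolding p q d_def lam_def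
    by (simp add: blinfun.diff_left blinfun.sum_left blinfun.scaleR_left sum_divide_distrib
        sum_subtractf diff_divide_distrib)
  have fb: "\<bar>blinfun_apply (f i) y\<bar> \<le> 1" "\<bar>blinfun_apply (g i) y\<bar> \<le> 1" if "i \<in> {1..n}" for i
  proof -
    have "norm (f i) \<le> 1" "norm (g i) \<le> 1" using f g that unfolding weak_star_slice_def by auto
    then show "\<bar>blinfun_apply (f i) y\<bar> \<le> 1" "\<bar>blinfun_apply (g i) y\<bar> \<le> 1"
      using norm_blinfun[of "f i" y] norm_blinfun[of "g i" y] y by auto
  qed
  have dle: "\<forall>i\<in>{1..n}. d i \<le> 2"
  proof
    fix i assume "i \<in> {1..n}"
    from fb[OF this] show "d i \<le> 2" unfolding d_def abs_le_iff by linarith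
  qed
  have sumd: "(\<Sum>i=1..n. d i) > n * (2 - \<eta>)"
    using y(2) papp npos by (simp add: less_divide_eq mult.commute)
  have dj: "d j > 2 - \<delta> / 2" if j: "j \<in> {1..n}" for j
  proof -
    have "d j \<ge> (\<Sum>i=1..n. d i) - 2 * (card {1..n} - 1)"
      using sum_term_lower[of "{1..n}" j d 2] j dle by simp
    moreover have "real (card {1..n} - 1) = real n - 1" using n1 by simp
    ultimately have "d j > n * (2 - \<eta>) - 2 * (real n - 1)" using sumd by (simp add: of_nat_diff) 
    then show ?thesis using eta by (simp add: algebra_simps)
  qed
  have "\<forall>x\<in>F. norm (x + y) \<ge> 2 - \<delta>"
  proof
    fix x assume "x \<in> F"
    then have "x \<in> F'" unfolding F'_def by simp
    then obtain j where j: "j \<in> {1..n}" "x = h j" using h unfolding bij_betw_def by auto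
    have fj: "blinfun_apply (f j) x > 1 - \<delta> / 2" "norm (f j) \<le> 1"
      using f j unfolding weak_star_slice_def \<alpha>_def by auto
    have "blinfun_apply (f j) y > 1 - \<delta> / 2" using dj[OF j(1)] fb[OF j(1)] unfolding d_def by linarith
    then have "blinfun_apply (f j) (x + y) > 2 - \<delta>" using fj by (simp add: blinfun.add_right)
    moreover have "blinfun_apply (f j) (x + y) \<le> norm (x + y)"
    proof -
      have "\<bar>blinfun_apply (f j) (x + y)\<bar> \<le> norm (f j) * norm (x + y)"
        using norm_blinfun[of "f j" "x + y"] by simp
      moreover have "norm (f j) * norm (x + y) \<le> 1 * norm (x + y)"
        using fj(2) by (intro mult_right_mono) auto
      ultimately show ?thesis by simp
    qed
    ultimately show "norm (x + y) \<ge> 2 - \<delta>" by simp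
  qed
  then show "\<exists>y::'a. norm y = 1 \<and> (\<forall>x\<in>F. norm (x + y) \<ge> 2 - \<delta>)" using y by blast
qed



lemma oct_two_sided:
  fixes y :: "'a::real_normed_vector"
  assumes E: "subspace E" and y: "norm y = 1" and oc: "\<forall>x\<in>E. norm (x + y) \<ge> (1 - \<delta>) * (norm x + norm y)"
    and d: "0 \<le> \<delta>" "\<delta> < 1" and e: "e \<in> E"
  shows "norm (e + t *\<^sub>R y) \<ge> (1 - \<delta>) * (norm e + \<bar>t\<bar>)"
proof (cases "t = 0")
  case True then show ?thesis using d by (simp add: mult_left_le_one_le)
next
  case False
  define s where "s = (if t > 0 then 1 else -1::real)"
  have s: "\<bar>t\<bar> = s * t" "s * s = 1" unfolding s_def using False by auto
  have "(s / \<bar>t\<bar>) *\<^sub>R e \<in> E" using E e by (simp add: subspace_scale)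
  then have "norm ((s / \<bar>t\<bar>) *\<^sub>R e + y) \<ge> (1 - \<delta>) * (norm ((s / \<bar>t\<bar>) *\<^sub>R e) + 1)"
    using oc y by auto
  then have "\<bar>t\<bar> * norm ((s / \<bar>t\<bar>) *\<^sub>R e + y) \<ge> \<bar>t\<bar> * ((1 - \<delta>) * (norm ((s / \<bar>t\<bar>) *\<^sub>R e) + 1))"
    by (simp add: mult_left_mono)
  moreover have "\<bar>t\<bar> * norm ((s / \<bar>t\<bar>) *\<^sub>R e + y) = norm (\<bar>t\<bar> *\<^sub>R ((s / \<bar>t\<bar>) *\<^sub>R e + y))" by simp
  moreover have "\<bar>t\<bar> *\<^sub>R ((s / \<bar>t\<bar>) *\<^sub>R e + y) = s *\<^sub>R (e + t *\<^sub>R y)"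
    using False s by (simp add: scaleR_add_right)
  moreover have "norm (s *\<^sub>R (e + t *\<^sub>R y)) = norm (e + t *\<^sub>R y)" unfolding s_def by simp
  moreover have "\<bar>t\<bar> * ((1 - \<delta>) * (norm ((s / \<bar>t\<bar>) *\<^sub>R e) + 1)) = (1 - \<delta>) * (norm e + \<bar>t\<bar>)"
  proof -
    have as: "\<bar>s\<bar> = 1" unfolding s_def by simp
    have "norm ((s / \<bar>t\<bar>) *\<^sub>R e) = \<bar>s\<bar> / \<bar>t\<bar> * norm e" by (simp add: as)
    then have "norm ((s / \<bar>t\<bar>) *\<^sub>R e) = norm e / \<bar>t\<bar>" using as by simp
    then show ?thesis using False as by (simp add: field_simps)
  qed
  ultimately show ?thesis by metis
qed

lemma oct_iii:
  assumes O: "octahedral TYPE('a::real_normed_vector)"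
  shows "prop_iii TYPE('a)"
  unfolding prop_iii_def
proof (intro allI impI)
  fix E :: "'a set" and n :: nat and xs :: "nat \<Rightarrow> ('a \<Rightarrow>\<^sub>L real)" and \<epsilon> \<epsilon>0 :: real
  assume H: "fin_dim_subspace E \<and> n \<ge> 1 \<and> (\<forall>i\<in>{1..n}. norm (xs i) \<le> 1) \<and> \<epsilon> > 0 \<and> 0 < \<epsilon>0 \<and> \<epsilon>0 < \<epsilon>"
  define \<delta> where "\<delta> = (\<epsilon> - \<epsilon>0) / (1 + \<epsilon>)"
  have d: "0 \<le> \<delta>" "\<delta> < 1" using H unfolding \<delta>_def by (auto simp: divide_less_eq)
  have d2: "(1 + \<epsilon>) * (1 - \<delta>) = 1 + \<epsilon>0" using H unfolding \<delta>_def by (simp add: field_simps)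
  have dpos: "\<delta> > 0" using H unfolding \<delta>_def by simp
  obtain y where y: "norm y = 1" "\<forall>x\<in>E. norm (x + y) \<ge> (1 - \<delta>) * (norm x + norm y)"
    using O H dpos unfolding octahedral_def by blast
  obtain B where B: "finite B" "E = span B" using H unfolding fin_dim_subspace_def by blast
  have E: "subspace E" using B by simp
  have lb: "norm (e + t *\<^sub>R y) \<ge> (1 - \<delta>) * (norm e + \<bar>t\<bar>)" if "e \<in> E" for e t
    using oct_two_sided[OF E y(1) y(2) d that] .
  show "\<exists>y. norm y = 1 \<and>
           (\<forall>\<gamma>::nat \<Rightarrow> real. (\<forall>i\<in>{1..n}. \<bar>\<gamma> i\<bar> \<le> 1 + \<epsilon>0) \<longrightarrow>
              (\<exists>ys::nat \<Rightarrow> ('a \<Rightarrow>\<^sub>L real). \<forall>i\<in>{1..n}.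
                  (\<forall>e\<in>E. blinfun_apply (ys i) e = blinfun_apply (xs i) e) \<and>
                  blinfun_apply (ys i) y = \<gamma> i \<and> norm (ys i) \<le> 1 + \<epsilon>))"
  proof (rule exI[of _ y], intro conjI allI impI)
    show "norm y = 1" by (rule y(1))
  next
    fix \<gamma> :: "nat \<Rightarrow> real" assume g: "\<forall>i\<in>{1..n}. \<bar>\<gamma> i\<bar> \<le> 1 + \<epsilon>0"
    have "\<exists>F::'a \<Rightarrow>\<^sub>L real. (\<forall>e\<in>E. blinfun_apply F e = blinfun_apply (xs i) e) \<and>
                  blinfun_apply F y = \<gamma> i \<and> norm F \<le> 1 + \<epsilon>" if i: "i \<in> {1..n}" for i
    proof -
      define G where "G = {(e + t *\<^sub>R y, blinfun_apply (xs i) e + t * \<gamma> i) | e t. e \<in> E}"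
      have sub: "subspace G" unfolding subspace_def
      proof (intro conjI ballI allI)
        show "0 \<in> G" unfolding G_def using E subspace_0[OF E]
          by (auto simp: zero_prod_def intro!: exI[of _ 0] exI[of _ "0::real"])
      next
        fix p q assume "p \<in> G" "q \<in> G"
        then obtain e t e' t' where p: "p = (e + t *\<^sub>R y, blinfun_apply (xs i) e + t * \<gamma> i)" "e \<in> E"
          and q: "q = (e' + t' *\<^sub>R y, blinfun_apply (xs i) e' + t' * \<gamma> i)" "e' \<in> E"
          unfolding G_def by blast
        have "p + q = ((e + e') + (t + t') *\<^sub>R y, blinfun_apply (xs i) (e + e') + (t + t') * \<gamma> i)"
          using p q by (simp add: blinfun.add_right algebra_simps scaleR_add_left)
        moreover have "e + e' \<in> E" using E p q subspace_add by blast
        ultimately show "p + q \<in> G" unfolding G_def by blast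
      next
        fix a p assume "p \<in> G"
        then obtain e t where p: "p = (e + t *\<^sub>R y, blinfun_apply (xs i) e + t * \<gamma> i)" "e \<in> E"
          unfolding G_def by blast
        have "a *\<^sub>R p = (a *\<^sub>R e + (a * t) *\<^sub>R y, blinfun_apply (xs i) (a *\<^sub>R e) + (a * t) * \<gamma> i)"
          using p by (simp add: blinfun.scaleR_right algebra_simps scaleR_add_right)
        moreover have "a *\<^sub>R e \<in> E" using E p subspace_scale by blast
        ultimately show "a *\<^sub>R p \<in> G" unfolding G_def by blast
      qed
      have bd: "\<forall>(x,r)\<in>G. r \<le> (1 + \<epsilon>) * norm x"
      proof (clarify)
        fix x r assume "(x, r) \<in> G"
        then obtain e t where xr: "x = e + t *\<^sub>R y" "r = blinfun_apply (xs i) e + t * \<gamma> i" "e \<in> E"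
          unfolding G_def by blast
        have "blinfun_apply (xs i) e \<le> norm e"
        proof -
          have "\<bar>blinfun_apply (xs i) e\<bar> \<le> norm (xs i) * norm e" using norm_blinfun[of "xs i" e] by simp
          also have "\<dots> \<le> 1 * norm e" using H i by (intro mult_right_mono) auto
          finally show ?thesis by simp
        qed
        moreover have "t * \<gamma> i \<le> \<bar>t\<bar> * (1 + \<epsilon>0)"
        proof -
          have "t * \<gamma> i \<le> \<bar>t * \<gamma> i\<bar>" by simp
          also have "\<dots> = \<bar>t\<bar> * \<bar>\<gamma> i\<bar>" by (simp add: abs_mult)
          also have "\<dots> \<le> \<bar>t\<bar> * (1 + \<epsilon>0)" using g i by (intro mult_left_mono) auto
          finally show ?thesis .
        qed
        moreover have "\<epsilon>0 * norm e \<ge> 0" using H by simp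
        moreover have "(1 + \<epsilon>0) * (norm e + \<bar>t\<bar>) = norm e + \<epsilon>0 * norm e + \<bar>t\<bar> * (1 + \<epsilon>0)"
          by (simp add: algebra_simps)
        ultimately have "r \<le> (1 + \<epsilon>0) * (norm e + \<bar>t\<bar>)" using xr(2) by linarith
        also have "\<dots> = (1 + \<epsilon>) * ((1 - \<delta>) * (norm e + \<bar>t\<bar>))" using d2 by simp
        also have "\<dots> \<le> (1 + \<epsilon>) * norm x" using lb[OF xr(3), of t] xr H by (intro mult_left_mono) auto
        finally show "r \<le> (1 + \<epsilon>) * norm x" .
      qed
      obtain F :: "'a \<Rightarrow>\<^sub>L real" where F: "norm F \<le> 1 + \<epsilon>" "\<forall>(x,r)\<in>G. blinfun_apply F x = r"
        using hahn_banach_graph[OF _ sub bd] H by auto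
      have "(e, blinfun_apply (xs i) e) \<in> G" if "e \<in> E" for e
        unfolding G_def using that by (force intro!: exI[of _ e] exI[of _ "0::real"])
      moreover have "(y, \<gamma> i) \<in> G" unfolding G_def using subspace_0[OF E]
        by (force intro!: exI[of _ 0] exI[of _ "1::real"])
      moreover have Fa: "blinfun_apply F a = b" if "(a,b) \<in> G" for a b using bspec[OF F(2) that] by simp
      ultimately show ?thesis using F(1) by blast
    qed
    then have "\<forall>i\<in>{1..n}. \<exists>F::'a \<Rightarrow>\<^sub>L real. (\<forall>e\<in>E. blinfun_apply F e = blinfun_apply (xs i) e) \<and>
                  blinfun_apply F y = \<gamma> i \<and> norm F \<le> 1 + \<epsilon>" by blast
    then show "\<exists>ys::nat \<Rightarrow> ('a \<Rightarrow>\<^sub>L real). \<forall>i\<in>{1..n}.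
                  (\<forall>e\<in>E. blinfun_apply (ys i) e = blinfun_apply (xs i) e) \<and>
                  blinfun_apply (ys i) y = \<gamma> i \<and> norm (ys i) \<le> 1 + \<epsilon>"
      by (rule bchoice)
  qed
qed

lemma iii_iii':
  assumes P: "prop_iii TYPE('a::real_normed_vector)"
  shows "prop_iii' TYPE('a)"
  unfolding prop_iii'_def
proof (intro allI impI)
  fix E :: "'a set" and n :: nat and xs :: "nat \<Rightarrow> ('a \<Rightarrow>\<^sub>L real)" and \<epsilon> :: real
  assume H: "fin_dim_subspace E \<and> n \<ge> 1 \<and> (\<forall>i\<in>{1..n}. norm (xs i) \<le> 1) \<and> \<epsilon> > 0"
  obtain y where y: "norm y = 1" and Y: "\<forall>\<gamma>::nat \<Rightarrow> real. (\<forall>i\<in>{1..n}. \<bar>\<gamma> i\<bar> \<le> 1 + \<epsilon>/2) \<longrightarrow>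
              (\<exists>ys::nat \<Rightarrow> ('a \<Rightarrow>\<^sub>L real). \<forall>i\<in>{1..n}.
                  (\<forall>e\<in>E. blinfun_apply (ys i) e = blinfun_apply (xs i) e) \<and>
                  blinfun_apply (ys i) y = \<gamma> i \<and> norm (ys i) \<le> 1 + \<epsilon>)"
    using P[unfolded prop_iii_def, rule_format, of E n xs \<epsilon> "\<epsilon>/2"] H by auto
  obtain x1 where x1: "\<forall>i\<in>{1..n}. (\<forall>e\<in>E. blinfun_apply (x1 i) e = blinfun_apply (xs i) e) \<and>
                  blinfun_apply (x1 i) y = 1 + \<epsilon>/2 \<and> norm (x1 i) \<le> 1 + \<epsilon>"
    using Y[rule_format, of "\<lambda>i. 1 + \<epsilon>/2"] H by auto
  obtain x2 where x2: "\<forall>i\<in>{1..n}. (\<forall>e\<in>E. blinfun_apply (x2 i) e = blinfun_apply (xs i) e) \<and>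
                  blinfun_apply (x2 i) y = -(1 + \<epsilon>/2) \<and> norm (x2 i) \<le> 1 + \<epsilon>"
    using Y[rule_format, of "\<lambda>i. -(1 + \<epsilon>/2)"] H by auto
  show "\<exists>y x1 x2. norm y = 1 \<and>
           (\<forall>i\<in>{1..n}.
              (\<forall>e\<in>E. blinfun_apply (x1 i) e = blinfun_apply (xs i) e) \<and>
              (\<forall>e\<in>E. blinfun_apply (x2 i) e = blinfun_apply (xs i) e) \<and>
              blinfun_apply (x1 i) y - blinfun_apply (x2 i) y > 2 - \<epsilon> \<and>
              norm (x1 i) \<le> 1 + \<epsilon> \<and> norm (x2 i) \<le> 1 + \<epsilon>)"
    using y x1 x2 H by (intro exI[of _ y] exI[of _ x1] exI[of _ x2]) auto
qed



lemma iii'_wSD2P: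
  assumes P: "prop_iii' TYPE('a::real_normed_vector)"
  shows "w_star_SD2P TYPE('a)"
  unfolding w_star_SD2P_def
proof (intro allI impI)
  fix n :: nat and lam :: "nat \<Rightarrow> real" and x :: "nat \<Rightarrow> 'a" and \<alpha> :: "nat \<Rightarrow> real"
  assume H: "n \<ge> 1 \<and> (\<forall>i\<in>{1..n}. lam i \<ge> 0) \<and> (\<Sum>i=1..n. lam i) = 1 \<and>
        (\<forall>i\<in>{1..n}. norm (x i) = 1 \<and> \<alpha> i > 0)"
  define D where "D = {\<Sum>i=1..n. lam i *\<^sub>R f i | f. \<forall>i\<in>{1..n}. f i \<in> weak_star_slice (x i) (\<alpha> i)}"
  have "\<forall>i\<in>{1..n}. \<exists>f::'a \<Rightarrow>\<^sub>L real. norm f \<le> 1 \<and> blinfun_apply f (x i) = 1"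
    using H by (intro ballI norming_functional) auto
  then have "\<exists>fs::nat \<Rightarrow> ('a \<Rightarrow>\<^sub>L real). \<forall>i\<in>{1..n}. norm (fs i) \<le> 1 \<and> blinfun_apply (fs i) (x i) = 1"
    by (rule bchoice)
  then obtain fs :: "nat \<Rightarrow> ('a \<Rightarrow>\<^sub>L real)" where fs: "\<forall>i\<in>{1..n}. norm (fs i) \<le> 1 \<and> blinfun_apply (fs i) (x i) = 1"
    by blast
  have "\<forall>i\<in>{1..n}. fs i \<in> weak_star_slice (x i) (\<alpha> i)" unfolding weak_star_slice_def using fs H by auto
  then have "(\<Sum>i=1..n. lam i *\<^sub>R fs i) \<in> D" unfolding D_def by (intro CollectI exI[of _ fs]) simp
  then have Dne: "D \<noteq> {}" by blast
  have Dnorm: "norm p \<le> 1" if pD: "p \<in> D" for p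
  proof -
    obtain f where p: "p = (\<Sum>i=1..n. lam i *\<^sub>R f i)" and f: "\<forall>i\<in>{1..n}. f i \<in> weak_star_slice (x i) (\<alpha> i)"
      using pD D_def by blast
    have "norm p \<le> (\<Sum>i=1..n. norm (lam i *\<^sub>R f i))" unfolding p by (rule norm_sum)
    also have "\<dots> \<le> (\<Sum>i=1..n. lam i)"
    proof (intro sum_mono)
      fix i assume i: "i \<in> {1..n}"
      have "norm (f i) \<le> 1" using f i unfolding weak_star_slice_def by auto
      then show "norm (lam i *\<^sub>R f i) \<le> lam i" using H i by (simp add: mult_left_le)
    qed
    finally show ?thesis using H by simp
  qed
  have dle: "dist p q \<le> 2" if "p \<in> D" "q \<in> D" for p q
    using Dnorm[OF that(1)] Dnorm[OF that(2)] norm_triangle_ineq4[of p q] by (simp add: dist_norm)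
  have bdd: "bdd_above ((\<lambda>(p,q). dist p q) ` (D \<times> D))"
    by (rule bdd_aboveI2[where M = 2]) (use dle in auto)
  have big: "\<exists>p\<in>D. \<exists>q\<in>D. dist p q \<ge> 2 - \<eta>" if eta: "\<eta> > 0" for \<eta>
  proof -
    define a where "a = Min (\<alpha> ` {1..n})"
    have apos: "a > 0" unfolding a_def using H by (subst Min_gr_iff) auto
    have ale: "a \<le> \<alpha> i" if "i \<in> {1..n}" for i unfolding a_def using that by simp
    define \<epsilon> where "\<epsilon> = min (\<eta> / 3) (a / 2)"
    have ep: "\<epsilon> > 0" "3 * \<epsilon> \<le> \<eta>" "\<epsilon> < a" using eta apos unfolding \<epsilon>_def by auto
    define E where "E = span (x ` {1..n})"
    have fdE: "fin_dim_subspace E" unfolding E_def fin_dim_subspace_def by blast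
    obtain y x1 x2 where y: "norm y = 1" and X: "\<forall>i\<in>{1..n}.
              (\<forall>e\<in>E. blinfun_apply (x1 i) e = blinfun_apply (fs i) e) \<and>
              (\<forall>e\<in>E. blinfun_apply (x2 i) e = blinfun_apply (fs i) e) \<and>
              blinfun_apply (x1 i) y - blinfun_apply (x2 i) y > 2 - \<epsilon> \<and>
              norm (x1 i) \<le> 1 + \<epsilon> \<and> norm (x2 i) \<le> 1 + \<epsilon>"
      using P[unfolded prop_iii'_def, rule_format, of E n fs \<epsilon>] fdE H fs ep by blast
    define c where "c = 1 / (1 + \<epsilon>)"
    have c1: "c > 0" "c * (1 + \<epsilon>) = 1" using ep unfolding c_def by auto
    have "(1 - \<epsilon>) * (1 + \<epsilon>) = 1 - \<epsilon> * \<epsilon>" by (simp add: algebra_simps)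
    then have "(1 - \<epsilon>) * (1 + \<epsilon>) \<le> 1" by simp
    then have "1 - \<epsilon> \<le> c" unfolding c_def using ep by (simp add: le_divide_eq)
    note c = c1 this
    have slice: "c *\<^sub>R xk \<in> weak_star_slice (x i) (\<alpha> i)"
      if i: "i \<in> {1..n}" and xk: "norm xk \<le> 1 + \<epsilon>" "blinfun_apply xk (x i) = 1" for xk i
    proof -
      have "norm (c *\<^sub>R xk) = c * norm xk" using c by simp
      also have "\<dots> \<le> c * (1 + \<epsilon>)" using c xk by (intro mult_left_mono) auto
      finally have "norm (c *\<^sub>R xk) \<le> 1" using c by simp
      moreover have "blinfun_apply (c *\<^sub>R xk) (x i) = c" using xk by (simp add: blinfun.scaleR_left)
      moreover have "c > 1 - \<alpha> i" using c ep ale[OF i] by linarith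
      ultimately show ?thesis unfolding weak_star_slice_def by simp
    qed
    have xE: "x i \<in> E" if "i \<in> {1..n}" for i unfolding E_def using that by (simp add: span_base)
    define p where "p = (\<Sum>i=1..n. lam i *\<^sub>R (c *\<^sub>R x1 i))"
    define q where "q = (\<Sum>i=1..n. lam i *\<^sub>R (c *\<^sub>R x2 i))"
    have s1: "\<forall>i\<in>{1..n}. c *\<^sub>R x1 i \<in> weak_star_slice (x i) (\<alpha> i)"
    proof
      fix i assume i: "i \<in> {1..n}"
      have "blinfun_apply (x1 i) (x i) = 1" using X i xE[OF i] fs by auto
      then show "c *\<^sub>R x1 i \<in> weak_star_slice (x i) (\<alpha> i)" using slice[OF i] X i by blast
    qed
    have s2: "\<forall>i\<in>{1..n}. c *\<^sub>R x2 i \<in> weak_star_slice (x i) (\<alpha> i)"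
    proof
      fix i assume i: "i \<in> {1..n}"
      have "blinfun_apply (x2 i) (x i) = 1" using X i xE[OF i] fs by auto
      then show "c *\<^sub>R x2 i \<in> weak_star_slice (x i) (\<alpha> i)" using slice[OF i] X i by blast
    qed
    have pD: "p \<in> D" unfolding p_def D_def using s1 by (intro CollectI exI[of _ "\<lambda>i. c *\<^sub>R x1 i"]) simp
    have qD: "q \<in> D" unfolding q_def D_def using s2 by (intro CollectI exI[of _ "\<lambda>i. c *\<^sub>R x2 i"]) simp
    have "blinfun_apply (p - q) y = (\<Sum>i=1..n. lam i * (c * (blinfun_apply (x1 i) y - blinfun_apply (x2 i) y)))"
      unfolding p_def q_def
      by (simp add: blinfun.diff_left blinfun.sum_left blinfun.scaleR_left sum_subtractf[symmetric] algebra_simps)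
    also have "\<dots> \<ge> (\<Sum>i=1..n. lam i * (c * (2 - \<epsilon>)))"
    proof (rule sum_mono, rule mult_left_mono)
      fix i assume i: "i \<in> {1..n}"
      show "c * (2 - \<epsilon>) \<le> c * (blinfun_apply (x1 i) y - blinfun_apply (x2 i) y)"
      proof -
        have "2 - \<epsilon> < blinfun_apply (x1 i) y - blinfun_apply (x2 i) y" using X i by blast
        then show ?thesis using c by (intro mult_left_mono) auto
      qed
    next
      fix i assume i: "i \<in> {1..n}"
      show "0 \<le> lam i" using H i by auto
    qed
    finally have "blinfun_apply (p - q) y \<ge> c * (2 - \<epsilon>)"
      using H by (simp add: sum_distrib_right[symmetric])
    moreover have "c * (2 - \<epsilon>) \<ge> 2 - \<eta>"
    proof -
      have "(2 - \<eta>) * (1 + \<epsilon>) = 2 - \<epsilon> - (\<eta> - 3 * \<epsilon>) - \<eta> * \<epsilon>" by (simp add: algebra_simps)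
      moreover have "\<eta> * \<epsilon> \<ge> 0" using ep eta by simp
      ultimately have "(2 - \<eta>) * (1 + \<epsilon>) \<le> 2 - \<epsilon>" using ep by linarith
      then show ?thesis using ep unfolding c_def by (simp add: field_simps)
    qed
    moreover have "blinfun_apply (p - q) y \<le> dist p q"
      using norm_blinfun[of "p - q" y] y by (simp add: dist_norm)
    ultimately have "dist p q \<ge> 2 - \<eta>" by linarith
    then show ?thesis using pD qD by blast
  qed
  have "diameter D = (SUP (p,q)\<in>D\<times>D. dist p q)" using Dne unfolding diameter_def by simp
  moreover have "(SUP (p,q)\<in>D\<times>D. dist p q) \<le> 2"
    using Dne dle by (intro cSUP_least) auto
  moreover have "2 \<le> (SUP (p,q)\<in>D\<times>D. dist p q)"
  proof (rule field_le_epsilon)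
    fix e :: real assume "e > 0"
    then obtain p q where "p \<in> D" "q \<in> D" "dist p q \<ge> 2 - e" using big by blast
    then have "2 - e \<le> (\<lambda>(p,q). dist p q) (p,q)" by simp
    also have "\<dots> \<le> (SUP (p,q)\<in>D\<times>D. dist p q)" using bdd \<open>p \<in> D\<close> \<open>q \<in> D\<close> by (intro cSUP_upper) auto
    finally show "2 \<le> (SUP (p,q)\<in>D\<times>D. dist p q) + e" by simp
  qed
  ultimately have "diameter D = 2" by linarith
  then show "diameter {\<Sum>i=1..n. lam i *\<^sub>R f i | f. \<forall>i\<in>{1..n}. f i \<in> weak_star_slice (x i) (\<alpha> i)} = 2"
    unfolding D_def .
qed


theorem theorem3p5:
  assumes "\<exists>x::'a::banach. x \<noteq> 0"
  shows "(w_star_SD2P TYPE('a) \<longleftrightarrow> octahedral TYPE('a)) \<and>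
         (octahedral TYPE('a) \<longleftrightarrow> prop_iii TYPE('a)) \<and>
         (octahedral TYPE('a) \<longleftrightarrow> prop_iii' TYPE('a))"
proof -
  have a: "octahedral TYPE('a) \<Longrightarrow> prop_iii TYPE('a)" by (rule oct_iii)
  have b: "prop_iii TYPE('a) \<Longrightarrow> prop_iii' TYPE('a)" by (rule iii_iii')
  have c: "prop_iii' TYPE('a) \<Longrightarrow> w_star_SD2P TYPE('a)" by (rule iii'_wSD2P)
  have d: "w_star_SD2P TYPE('a) \<Longrightarrow> octahedral TYPE('a)"
    using wSD2P_critC[OF assms] critC_octahedral by blast
  show ?thesis using a b c d by blast
qed

end
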